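(* Let $H$ be a hereditary artin algebra, $n\ge2$, and let $f=\{f^i\}_{i=1}^n\colon X\to Y$ be an irreducible morphism in $\mathbf{C_n}({\rm proj}\,H)$ with $X$ or $Y$ indecomposable. Then: (1) $f$ is of type (ret) if and only if ${\rm Ker}\,f\in\mathbf{C_n}({\rm proj}\,H)\setminus\{0\}$; (2) if $f$ is of type (ret-irred-sec), then ${\rm Ker}\,f=0$.
   Context: For an artin algebra $\Lambda$ and $n\ge 2$, $\mathbf{C_n}({\rm proj}\,\Lambda)$ is the full subcategory of the category of complexes of finitely generated right $\Lambda$-modules consisting of complexes $X=(X^i,d^i_X)$ with $X^i$ projective for all $i$ and $X^i=0$ for $i\notin\{1,\dots,n\}$; morphisms are chain maps $f=\{f^i\}$. Kernels and cokernels are computed degreewise (with induced differentials) in the category of complexes of modules. A morphism in $\mathbf{C_n}({\rm proj}\,\Lambda)$ is irreducible if it is neither a section nor a retraction, and whenever $f=gh$ then $h$ is a section or $g$ is a retraction. Every irreducible $f=\{f^i\}$ in $\mathbf{C_n}({\rm proj}\,\Lambda)$ is of one of the following types: (sec) every $f^i$ is a section in ${\rm proj}\,\Lambda$; (ret) every $f^i$ is a retraction in ${\rm proj}\,\Lambda$; (ret-irred-sec) there is $i$ with $f^i$ irreducible in ${\rm proj}\,\Lambda$, $f^j$ a section for all $j>i$ and $f^j$ a retraction for all $j<i$. *)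

theory Defs
  imports Main "HOL-Library.Function_Algebras"
begin

(* The artin algebra Lambda is the whole type 'a :: ring_1.
   Right Lambda-modules used here are right submodules of the free module
   of finitely supported column vectors  nat => 'a. *)

type_synonym 'a vec = "nat \<Rightarrow> 'a"

definition fvec :: "'a::zero vec set" where
  "fvec = {v. finite {i. v i \<noteq> 0}}"

definition freemod :: "nat \<Rightarrow> 'a::zero vec set" where
  "freemod m = {v. \<forall>i\<ge>m. v i = 0}"

definition rsmult :: "'a::times vec \<Rightarrow> 'a \<Rightarrow> 'a vec" where
  "rsmult v c = (\<lambda>i. v i * c)"

definition submod :: "'a::ring_1 vec set \<Rightarrow> bool" where
  "submod M \<longleftrightarrow> M \<subseteq> fvec \<and> 0 \<in> M \<and> (\<forall>u\<in>M. \<forall>v\<in>M. u + v \<in> M)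
     \<and> (\<forall>v\<in>M. \<forall>c. rsmult v c \<in> M)"

definition hom :: "'a::ring_1 vec set \<Rightarrow> 'a vec set \<Rightarrow> ('a vec \<Rightarrow> 'a vec) set" where
  "hom M N = {f. (\<forall>v\<in>M. f v \<in> N) \<and> (\<forall>u\<in>M. \<forall>v\<in>M. f (u + v) = f u + f v)
     \<and> (\<forall>v\<in>M. \<forall>c. f (rsmult v c) = rsmult (f v) c) \<and> (\<forall>v. v \<notin> M \<longrightarrow> f v = 0)}"

definition idm :: "'a::zero vec set \<Rightarrow> 'a vec \<Rightarrow> 'a vec" where
  "idm M = (\<lambda>v. if v \<in> M then v else 0)"

(* finitely generated projective: split quotient of a free module Lambda^m *)
definition proj_mod :: "'a::ring_1 vec set \<Rightarrow> bool" where
  "proj_mod M \<longleftrightarrow> submod M \<and>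
     (\<exists>m p s. p \<in> hom (freemod m) M \<and> s \<in> hom M (freemod m) \<and> p \<circ> s = idm M)"

definition center :: "'a::ring_1 set" where
  "center = {z. \<forall>x. z * x = x * z}"

definition subring_c :: "'a::ring_1 set \<Rightarrow> bool" where
  "subring_c R \<longleftrightarrow> 0 \<in> R \<and> 1 \<in> R \<and> (\<forall>x\<in>R. \<forall>y\<in>R. x + y \<in> R \<and> x - y \<in> R \<and> x * y \<in> R)"

definition ideal_in :: "'a::ring_1 set \<Rightarrow> 'a set \<Rightarrow> bool" where
  "ideal_in R I \<longleftrightarrow> I \<subseteq> R \<and> 0 \<in> I \<and> (\<forall>x\<in>I. \<forall>y\<in>I. x + y \<in> I)
     \<and> (\<forall>x\<in>I. \<forall>r\<in>R. r * x \<in> I)"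

definition artinian_sub :: "'a::ring_1 set \<Rightarrow> bool" where
  "artinian_sub R \<longleftrightarrow> \<not> (\<exists>I :: nat \<Rightarrow> 'a set. (\<forall>k. ideal_in R (I k)) \<and> (\<forall>k. I (Suc k) \<subset> I k))"

definition artin_algebra :: "'a::ring_1 itself \<Rightarrow> bool" where
  "artin_algebra _ \<longleftrightarrow> (\<exists>R :: 'a set. R \<subseteq> center \<and> subring_c R \<and> artinian_sub R \<and>
     (\<exists>bs :: 'a list. \<forall>x. \<exists>cs. length cs = length bs \<and> set cs \<subseteq> R \<and>
        x = (\<Sum>j<length bs. cs ! j * bs ! j)))"

definition right_ideal :: "'a::ring_1 set \<Rightarrow> bool" where
  "right_ideal I \<longleftrightarrow> 0 \<in> I \<and> (\<forall>x\<in>I. \<forall>y\<in>I. x + y \<in> I) \<and> (\<forall>x\<in>I. \<forall>c. x * c \<in> I)"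

(* a right ideal viewed as a submodule of Lambda^1 (coordinate 0) *)
definition ideal_as_mod :: "'a::ring_1 set \<Rightarrow> 'a vec set" where
  "ideal_as_mod I = {v. v 0 \<in> I \<and> (\<forall>i>0. v i = 0)}"

definition hereditary :: "'a::ring_1 itself \<Rightarrow> bool" where
  "hereditary _ \<longleftrightarrow> (\<forall>I :: 'a set. right_ideal I \<longrightarrow> proj_mod (ideal_as_mod I))"

(* complexes: components X i (i : nat; degree 0 and degrees > n are forced zero), differentials d i : X i -> X (i+1) *)
type_synonym 'a cx = "(nat \<Rightarrow> 'a vec set) \<times> (nat \<Rightarrow> 'a vec \<Rightarrow> 'a vec)"

definition Cn :: "nat \<Rightarrow> 'a::ring_1 cx set" where
  "Cn n = {(X, d). (\<forall>i. proj_mod (X i)) \<and> (\<forall>i. i \<notin> {1..n} \<longrightarrow> X i = {0})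
     \<and> (\<forall>i. d i \<in> hom (X i) (X (Suc i))) \<and> (\<forall>i. d (Suc i) \<circ> d i = (\<lambda>_. 0))}"

definition chmap :: "'a::ring_1 cx \<Rightarrow> 'a cx \<Rightarrow> (nat \<Rightarrow> 'a vec \<Rightarrow> 'a vec) set" where
  "chmap A B = {f. (\<forall>i. f i \<in> hom (fst A i) (fst B i)) \<and> (\<forall>i. f (Suc i) \<circ> snd A i = snd B i \<circ> f i)}"

definition cmp :: "(nat \<Rightarrow> 'a vec \<Rightarrow> 'a vec) \<Rightarrow> (nat \<Rightarrow> 'a vec \<Rightarrow> 'a vec) \<Rightarrow> nat \<Rightarrow> 'a vec \<Rightarrow> 'a vec" where
  "cmp g h = (\<lambda>i. g i \<circ> h i)"

definition cid :: "'a::zero cx \<Rightarrow> nat \<Rightarrow> 'a vec \<Rightarrow> 'a vec" where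
  "cid A = (\<lambda>i. idm (fst A i))"

definition cadd :: "(nat \<Rightarrow> 'a vec \<Rightarrow> 'a::plus vec) \<Rightarrow> (nat \<Rightarrow> 'a vec \<Rightarrow> 'a vec) \<Rightarrow> nat \<Rightarrow> 'a vec \<Rightarrow> 'a vec" where
  "cadd a b = (\<lambda>i v. a i v + b i v)"

definition is_zero_cx :: "'a::zero cx \<Rightarrow> bool" where
  "is_zero_cx A \<longleftrightarrow> (\<forall>i. fst A i = {0})"

definition section_C :: "'a::ring_1 cx \<Rightarrow> 'a cx \<Rightarrow> (nat \<Rightarrow> 'a vec \<Rightarrow> 'a vec) \<Rightarrow> bool" where
  "section_C A B f \<longleftrightarrow> f \<in> chmap A B \<and> (\<exists>r\<in>chmap B A. cmp r f = cid A)"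

definition retraction_C :: "'a::ring_1 cx \<Rightarrow> 'a cx \<Rightarrow> (nat \<Rightarrow> 'a vec \<Rightarrow> 'a vec) \<Rightarrow> bool" where
  "retraction_C A B f \<longleftrightarrow> f \<in> chmap A B \<and> (\<exists>s\<in>chmap B A. cmp f s = cid B)"

definition irreducible_C :: "nat \<Rightarrow> 'a::ring_1 cx \<Rightarrow> 'a cx \<Rightarrow> (nat \<Rightarrow> 'a vec \<Rightarrow> 'a vec) \<Rightarrow> bool" where
  "irreducible_C n A B f \<longleftrightarrow> A \<in> Cn n \<and> B \<in> Cn n \<and> f \<in> chmap A B
     \<and> \<not> section_C A B f \<and> \<not> retraction_C A B f
     \<and> (\<forall>Z\<in>Cn n. \<forall>g\<in>chmap Z B. \<forall>h\<in>chmap A Z. f = cmp g h \<longrightarrow> section_C A Z h \<or> retraction_C Z B g)"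

definition indec_C :: "nat \<Rightarrow> 'a::ring_1 cx \<Rightarrow> bool" where
  "indec_C n A \<longleftrightarrow> A \<in> Cn n \<and> \<not> is_zero_cx A \<and>
     \<not> (\<exists>A1 A2 i1 i2 p1 p2. A1 \<in> Cn n \<and> A2 \<in> Cn n \<and> \<not> is_zero_cx A1 \<and> \<not> is_zero_cx A2
        \<and> i1 \<in> chmap A1 A \<and> i2 \<in> chmap A2 A \<and> p1 \<in> chmap A A1 \<and> p2 \<in> chmap A A2
        \<and> cmp p1 i1 = cid A1 \<and> cmp p2 i2 = cid A2
        \<and> cmp p1 i2 = (\<lambda>_ _. 0) \<and> cmp p2 i1 = (\<lambda>_ _. 0)
        \<and> cadd (cmp i1 p1) (cmp i2 p2) = cid A)"

definition sec_P :: "'a::ring_1 vec set \<Rightarrow> 'a vec set \<Rightarrow> ('a vec \<Rightarrow> 'a vec) \<Rightarrow> bool" where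
  "sec_P M N \<phi> \<longleftrightarrow> \<phi> \<in> hom M N \<and> (\<exists>r\<in>hom N M. r \<circ> \<phi> = idm M)"

definition ret_P :: "'a::ring_1 vec set \<Rightarrow> 'a vec set \<Rightarrow> ('a vec \<Rightarrow> 'a vec) \<Rightarrow> bool" where
  "ret_P M N \<phi> \<longleftrightarrow> \<phi> \<in> hom M N \<and> (\<exists>s\<in>hom N M. \<phi> \<circ> s = idm N)"

definition irred_P :: "'a::ring_1 vec set \<Rightarrow> 'a vec set \<Rightarrow> ('a vec \<Rightarrow> 'a vec) \<Rightarrow> bool" where
  "irred_P M N \<phi> \<longleftrightarrow> proj_mod M \<and> proj_mod N \<and> \<phi> \<in> hom M N
     \<and> \<not> sec_P M N \<phi> \<and> \<not> ret_P M N \<phi>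
     \<and> (\<forall>Z. proj_mod Z \<longrightarrow> (\<forall>g\<in>hom Z N. \<forall>h\<in>hom M Z. \<phi> = g \<circ> h \<longrightarrow> sec_P M Z h \<or> ret_P Z N g))"

definition type_sec :: "nat \<Rightarrow> 'a::ring_1 cx \<Rightarrow> 'a cx \<Rightarrow> (nat \<Rightarrow> 'a vec \<Rightarrow> 'a vec) \<Rightarrow> bool" where
  "type_sec n A B f \<longleftrightarrow> (\<forall>i\<in>{1..n}. sec_P (fst A i) (fst B i) (f i))"

definition type_ret :: "nat \<Rightarrow> 'a::ring_1 cx \<Rightarrow> 'a cx \<Rightarrow> (nat \<Rightarrow> 'a vec \<Rightarrow> 'a vec) \<Rightarrow> bool" where
  "type_ret n A B f \<longleftrightarrow> (\<forall>i\<in>{1..n}. ret_P (fst A i) (fst B i) (f i))"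

definition type_ris :: "nat \<Rightarrow> 'a::ring_1 cx \<Rightarrow> 'a cx \<Rightarrow> (nat \<Rightarrow> 'a vec \<Rightarrow> 'a vec) \<Rightarrow> bool" where
  "type_ris n A B f \<longleftrightarrow> (\<exists>i\<in>{1..n}. irred_P (fst A i) (fst B i) (f i)
     \<and> (\<forall>j\<in>{1..n}. i < j \<longrightarrow> sec_P (fst A j) (fst B j) (f j))
     \<and> (\<forall>j\<in>{1..n}. j < i \<longrightarrow> ret_P (fst A j) (fst B j) (f j)))"

definition kerCx :: "(nat \<Rightarrow> 'a vec \<Rightarrow> 'a vec) \<Rightarrow> 'a::zero cx \<Rightarrow> 'a cx" where
  "kerCx f A = (let K = (\<lambda>i. {v \<in> fst A i. f i v = 0}) in
     (K, \<lambda>i v. if v \<in> K i then snd A i v else 0))"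

end

theory Submission
  imports Defs
begin

lemma sum_fun_apply: "(sum f A) x = (\<Sum>j\<in>A. f j x)"
  by (induction A rule: infinite_finite_induct) auto

lemma rsmult_add1: "rsmult (u + v) c = rsmult u c + rsmult (v::'a::ring_1 vec) c"
  by (auto simp: rsmult_def fun_eq_iff distrib_right)
lemma rsmult_add2: "rsmult v (a + b) = rsmult v a + rsmult (v::'a::ring_1 vec) b"
  by (auto simp: rsmult_def fun_eq_iff distrib_left)
lemma rsmult_assoc: "rsmult (rsmult v a) b = rsmult (v::'a::ring_1 vec) (a * b)"
  by (auto simp: rsmult_def fun_eq_iff mult.assoc)
lemma rsmult_zero1[simp]: "rsmult 0 c = (0::'a::ring_1 vec)"
  by (auto simp: rsmult_def fun_eq_iff)
lemma rsmult_zero2[simp]: "rsmult v 0 = (0::'a::ring_1 vec)"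
  by (auto simp: rsmult_def fun_eq_iff)
lemma rsmult_one[simp]: "rsmult v 1 = (v::'a::ring_1 vec)"
  by (auto simp: rsmult_def fun_eq_iff)
lemma rsmult_m1: "rsmult v (-1) = - (v::'a::ring_1 vec)"
  by (auto simp: rsmult_def fun_eq_iff)
lemma rsmult_apply[simp]: "rsmult v c i = v i * c"
  by (simp add: rsmult_def)
lemma rsmult_sum: "rsmult (sum w S) c = (\<Sum>j\<in>S. rsmult (w j) (c::'a::ring_1))"
  by (simp add: fun_eq_iff sum_fun_apply sum_distrib_right)

lemma submod_0: "submod M \<Longrightarrow> 0 \<in> M" by (simp add: submod_def)
lemma submod_add: "submod M \<Longrightarrow> u \<in> M \<Longrightarrow> v \<in> M \<Longrightarrow> u + v \<in> M" by (simp add: submod_def)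
lemma submod_smult: "submod M \<Longrightarrow> v \<in> M \<Longrightarrow> rsmult v c \<in> M" by (simp add: submod_def)
lemma submod_uminus: "submod M \<Longrightarrow> v \<in> M \<Longrightarrow> - v \<in> M"
  by (metis rsmult_m1 submod_smult)
lemma submod_diff: "submod M \<Longrightarrow> u \<in> M \<Longrightarrow> v \<in> M \<Longrightarrow> u - v \<in> M"
  by (metis diff_conv_add_uminus submod_add submod_uminus)
lemma submod_sum: "submod M \<Longrightarrow> (\<And>j. j \<in> S \<Longrightarrow> w j \<in> M) \<Longrightarrow> sum w S \<in> M"
  by (induction S rule: infinite_finite_induct) (auto simp: submod_0 submod_add)

lemma hom_in: "f \<in> hom M N \<Longrightarrow> v \<in> M \<Longrightarrow> f v \<in> N" by (simp add: hom_def)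
lemma hom_add: "f \<in> hom M N \<Longrightarrow> u \<in> M \<Longrightarrow> v \<in> M \<Longrightarrow> f (u + v) = f u + f v" by (simp add: hom_def)
lemma hom_smult: "f \<in> hom M N \<Longrightarrow> v \<in> M \<Longrightarrow> f (rsmult v c) = rsmult (f v) c" by (simp add: hom_def)
lemma hom_out: "f \<in> hom M N \<Longrightarrow> v \<notin> M \<Longrightarrow> f v = 0" by (simp add: hom_def)
lemma hom_0: "f \<in> hom M N \<Longrightarrow> submod M \<Longrightarrow> f 0 = 0"
proof -
  assume a: "f \<in> hom M N" "submod M"
  have "f (rsmult 0 0) = rsmult (f 0) 0" by (rule hom_smult[OF a(1) submod_0[OF a(2)]])
  then show ?thesis by (simp only: rsmult_zero2)
qed
lemma hom_uminus: "f \<in> hom M N \<Longrightarrow> v \<in> M \<Longrightarrow> f (- v) = - (f v)"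
proof -
  assume a: "f \<in> hom M N" "v \<in> M"
  have "f (rsmult v (-1)) = rsmult (f v) (-1)" by (rule hom_smult[OF a])
  then show ?thesis by (simp only: rsmult_m1)
qed
lemma hom_diff: "f \<in> hom M N \<Longrightarrow> submod M \<Longrightarrow> u \<in> M \<Longrightarrow> v \<in> M \<Longrightarrow> f (u - v) = f u - f v"
proof -
  assume a: "f \<in> hom M N" "submod M" "u \<in> M" "v \<in> M"
  have "f (u + - v) = f u + f (- v)" by (rule hom_add[OF a(1) a(3) submod_uminus[OF a(2) a(4)]])
  also have "f (- v) = - (f v)" by (rule hom_uminus[OF a(1) a(4)])
  finally show ?thesis by (simp only: diff_conv_add_uminus)
qed
lemma hom_sum: "f \<in> hom M N \<Longrightarrow> submod M \<Longrightarrow> (\<And>j. j \<in> S \<Longrightarrow> w j \<in> M) \<Longrightarrow> f (sum w S) = (\<Sum>j\<in>S. f (w j))"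
proof (induction S rule: infinite_finite_induct)
  case (infinite A) then show ?case using hom_0[OF infinite.prems(1,2)] by simp
next
  case empty then show ?case using hom_0[OF empty.prems(1,2)] by simp
next
  case (insert x F)
  have e1: "sum w (insert x F) = w x + sum w F" using insert(1,2) by (rule sum.insert)
  have e2: "(\<Sum>j\<in>insert x F. f (w j)) = f (w x) + (\<Sum>j\<in>F. f (w j))" using insert(1,2) by (rule sum.insert)
  have e3: "f (sum w F) = (\<Sum>j\<in>F. f (w j))" by (rule insert.IH) (use insert.prems in auto)
  have e4: "f (w x + sum w F) = f (w x) + f (sum w F)" using insert.prems by (intro hom_add) (auto intro: submod_sum)
  show ?case by (simp only: e1 e2 e3 e4)
qed
lemma hom_comp: "f \<in> hom M N \<Longrightarrow> g \<in> hom N K \<Longrightarrow> submod N \<Longrightarrow> g \<circ> f \<in> hom M K"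
proof -
  assume a: "f \<in> hom M N" "g \<in> hom N K" "submod N"
  have 1: "\<forall>v\<in>M. (g \<circ> f) v \<in> K" using a by (auto intro: hom_in)
  have 2: "\<forall>u\<in>M. \<forall>v\<in>M. (g \<circ> f) (u + v) = (g \<circ> f) u + (g \<circ> f) v"
  proof (intro ballI)
    fix u v assume "u \<in> M" "v \<in> M"
    then show "(g \<circ> f) (u + v) = (g \<circ> f) u + (g \<circ> f) v"
      using a hom_add[OF a(1)] hom_add[OF a(2)] hom_in[OF a(1)] by simp
  qed
  have 3: "\<forall>v\<in>M. \<forall>c. (g \<circ> f) (rsmult v c) = rsmult ((g \<circ> f) v) c"
    using a hom_smult[OF a(1)] hom_smult[OF a(2)] hom_in[OF a(1)] by simp
  have 4: "\<forall>v. v \<notin> M \<longrightarrow> (g \<circ> f) v = 0"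
    using a hom_out[OF a(1)] hom_0[OF a(2) a(3)] by simp
  show ?thesis using 1 2 3 4 unfolding hom_def by blast
qed

lemma freemod_fvec: "freemod m \<subseteq> fvec"
proof
  fix v :: "'a vec" assume "v \<in> freemod m"
  then have "{i. v i \<noteq> 0} \<subseteq> {..<m}" by (auto simp: freemod_def not_less[symmetric])
  then show "v \<in> fvec" by (simp add: fvec_def finite_subset)
qed
lemma submod_freemod: "submod (freemod m :: 'a::ring_1 vec set)"
  using freemod_fvec by (auto simp: submod_def freemod_def)

definition ev :: "nat \<Rightarrow> 'a::ring_1 vec" where "ev j = (\<lambda>i. if i = j then 1 else 0)"

lemma freemod_decomp: "x \<in> freemod m \<Longrightarrow> (\<Sum>j<m. rsmult (ev j) (x j)) = x"
proof (rule ext)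
  fix i assume x: "x \<in> freemod m"
  have "(\<Sum>j<m. rsmult (ev j) (x j)) i = (\<Sum>j<m. if i = j then x j else 0)"
  proof -
    have "\<And>j. rsmult (ev j) (x j) i = (if i = j then x j else 0)" by (simp add: ev_def)
    then show ?thesis by (simp add: sum_fun_apply)
  qed
  also have "\<dots> = x i" using x by (cases "i < m") (auto simp: freemod_def)
  finally show "(\<Sum>j<m. rsmult (ev j) (x j)) i = x i" .
qed


lemma ev_freemod: "j < m \<Longrightarrow> ev j \<in> freemod m"
  by (simp add: ev_def freemod_def)

lemma proj_submod: "proj_mod P \<Longrightarrow> submod P" by (simp add: proj_mod_def)

lemma lift:
  assumes P: "proj_mod P" and M: "submod M" and q: "q \<in> hom M P"
    and surj: "\<forall>y\<in>P. \<exists>x\<in>M. q x = y"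
  shows "\<exists>\<sigma>\<in>hom P M. q \<circ> \<sigma> = idm P"
proof -
  obtain m p s where p: "p \<in> hom (freemod m) P" and s: "s \<in> hom P (freemod m)" and ps: "p \<circ> s = idm P"
    using P unfolding proj_mod_def by blast
  have sP: "submod P" using P by (simp add: proj_mod_def)
  have "\<forall>j\<in>{..<m}. \<exists>x. x \<in> M \<and> q x = p (ev j)"
    using surj hom_in[OF p] ev_freemod by blast
  then obtain w where w: "\<And>j. j \<in> {..<m} \<Longrightarrow> w j \<in> M \<and> q (w j) = p (ev j)"
    using bchoice[of "{..<m}" "\<lambda>j x. x \<in> M \<and> q x = p (ev j)"] by blast
  define \<sigma> where "\<sigma> v = (if v \<in> P then (\<Sum>j<m. rsmult (w j) (s v j)) else 0)" for v
  have inM: "\<sigma> v \<in> M" for v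
    unfolding \<sigma>_def using w by (auto intro!: submod_sum submod_smult M submod_0)
  have add: "\<sigma> (u + v) = \<sigma> u + \<sigma> v" if "u \<in> P" "v \<in> P" for u v
  proof -
    have "u + v \<in> P" using sP that by (rule submod_add)
    moreover have "s (u + v) = s u + s v" using hom_add[OF s that] .
    ultimately have "\<sigma> (u + v) = (\<Sum>j<m. rsmult (w j) (s u j) + rsmult (w j) (s v j))"
      by (simp add: \<sigma>_def rsmult_add2)
    also have "\<dots> = \<sigma> u + \<sigma> v" using that by (simp add: \<sigma>_def sum.distrib)
    finally show ?thesis .
  qed
  have smul: "\<sigma> (rsmult v c) = rsmult (\<sigma> v) c" if "v \<in> P" for v c
  proof -
    have "rsmult v c \<in> P" using sP that by (rule submod_smult)
    moreover have "s (rsmult v c) = rsmult (s v) c" using hom_smult[OF s that] .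
    ultimately have "\<sigma> (rsmult v c) = (\<Sum>j<m. rsmult (rsmult (w j) (s v j)) c)"
      by (simp add: \<sigma>_def rsmult_assoc)
    also have "\<dots> = rsmult (\<sigma> v) c" using that by (simp add: \<sigma>_def rsmult_sum)
    finally show ?thesis .
  qed
  have out: "\<forall>v. v \<notin> P \<longrightarrow> \<sigma> v = 0" by (simp add: \<sigma>_def)
  have hs: "\<sigma> \<in> hom P M"
    unfolding hom_def using inM add smul out by blast
  have "(q \<circ> \<sigma>) v = idm P v" for v
  proof (cases "v \<in> P")
    case True
    have sv: "s v \<in> freemod m" using hom_in[OF s True] .
    have "q (\<sigma> v) = (\<Sum>j<m. q (rsmult (w j) (s v j)))"
      using True w by (simp add: \<sigma>_def, intro hom_sum[OF q M]) (simp add: submod_smult[OF M])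
    also have "\<dots> = (\<Sum>j<m. p (rsmult (ev j) (s v j)))"
      using w by (intro sum.cong refl) (simp add: hom_smult[OF q] hom_smult[OF p] ev_freemod)
    also have "\<dots> = p (\<Sum>j<m. rsmult (ev j) (s v j))"
      by (rule hom_sum[OF p submod_freemod, symmetric]) (simp add: ev_freemod submod_smult[OF submod_freemod])
    also have "\<dots> = p (s v)" using freemod_decomp[OF sv] by simp
    also have "\<dots> = v" using ps True by (metis comp_apply idm_def)
    finally show ?thesis using True by (simp add: idm_def)
  next
    case False
    then show ?thesis by (simp add: \<sigma>_def idm_def hom_0[OF q M])
  qed
  then show ?thesis using hs by blast
qed

lemma retract_proj:
  assumes P: "proj_mod P" and M: "submod M" and a: "a \<in> hom P M" and b: "b \<in> hom M P"
    and ab: "a \<circ> b = idm M"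
  shows "proj_mod M"
proof -
  obtain m p s where p: "p \<in> hom (freemod m) P" and s: "s \<in> hom P (freemod m)" and ps: "p \<circ> s = idm P"
    using P unfolding proj_mod_def by blast
  have sP: "submod P" using P by (simp add: proj_mod_def)
  have 1: "a \<circ> p \<in> hom (freemod m) M" by (rule hom_comp[OF p a sP])
  have 2: "s \<circ> b \<in> hom M (freemod m)" by (rule hom_comp[OF b s sP])
  have 3: "(a \<circ> p) \<circ> (s \<circ> b) = idm M"
  proof
    fix v show "((a \<circ> p) \<circ> (s \<circ> b)) v = idm M v"
    proof (cases "v \<in> M")
      case True
      have "p (s (b v)) = b v" using ps hom_in[OF b True] by (metis comp_apply idm_def)
      then show ?thesis using ab by (metis comp_apply)
    next
      case False
      then show ?thesis using hom_out[OF b False] ps hom_0[OF a sP] submod_0[OF sP]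
        by (simp add: idm_def) (metis comp_apply idm_def)
    qed
  qed
  show ?thesis unfolding proj_mod_def using M 1 2 3 by blast
qed


lemma sum_proj:
  assumes A: "proj_mod A" and B: "proj_mod B" and M: "submod M"
    and al: "\<alpha> \<in> hom A M" and be: "\<beta> \<in> hom B M" and rh: "\<rho> \<in> hom M A" and ta: "\<tau> \<in> hom M B"
    and dec: "\<forall>v\<in>M. \<alpha> (\<rho> v) + \<beta> (\<tau> v) = v"
  shows "proj_mod M"
proof -
  obtain m1 p1 s1 where p1: "p1 \<in> hom (freemod m1) A" and s1: "s1 \<in> hom A (freemod m1)" and ps1: "p1 \<circ> s1 = idm A"
    using A unfolding proj_mod_def by blast
  obtain m2 p2 s2 where p2: "p2 \<in> hom (freemod m2) B" and s2: "s2 \<in> hom B (freemod m2)" and ps2: "p2 \<circ> s2 = idm B"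
    using B unfolding proj_mod_def by blast
  have sA: "submod A" using A by (simp add: proj_mod_def)
  have sB: "submod B" using B by (simp add: proj_mod_def)
  have sF: "submod (freemod k)" for k :: nat by (rule submod_freemod)
  define lo :: "'a vec \<Rightarrow> 'a vec" where "lo x = (\<lambda>i. if i < m1 then x i else 0)" for x
  define hi :: "'a vec \<Rightarrow> 'a vec" where "hi x = (\<lambda>i. x (i + m1))" for x
  have lo_f: "lo x \<in> freemod m1" for x by (simp add: lo_def freemod_def)
  have hi_f: "x \<in> freemod (m1 + m2) \<Longrightarrow> hi x \<in> freemod m2" for x by (simp add: hi_def freemod_def)
  have lo_add: "lo (x + y) = lo x + lo y" for x y by (simp add: lo_def fun_eq_iff)
  have hi_add: "hi (x + y) = hi x + hi y" for x y by (simp add: hi_def fun_eq_iff)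
  have lo_sm: "lo (rsmult x c) = rsmult (lo x) c" for x c by (simp add: lo_def fun_eq_iff)
  have hi_sm: "hi (rsmult x c) = rsmult (hi x) c" for x c by (simp add: hi_def fun_eq_iff)
  define s where "s v = (if v \<in> M then (\<lambda>i. if i < m1 then s1 (\<rho> v) i else s2 (\<tau> v) (i - m1)) else 0)" for v
  define p where "p x = (if x \<in> freemod (m1 + m2) then \<alpha> (p1 (lo x)) + \<beta> (p2 (hi x)) else 0)" for x
  have p_in: "p x \<in> M" for x
    unfolding p_def using hom_in[OF al] hom_in[OF be] hom_in[OF p1 lo_f] hom_in[OF p2 hi_f] submod_0[OF M]
    by (auto intro!: submod_add[OF M])
  have p_add: "p (x + y) = p x + p y" if "x \<in> freemod (m1 + m2)" "y \<in> freemod (m1 + m2)" for x y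
  proof -
    have e1: "p1 (lo (x + y)) = p1 (lo x) + p1 (lo y)" unfolding lo_add by (rule hom_add[OF p1 lo_f lo_f])
    have e2: "p2 (hi (x + y)) = p2 (hi x) + p2 (hi y)" unfolding hi_add by (rule hom_add[OF p2 hi_f hi_f]) (fact that)+
    have e3: "\<alpha> (p1 (lo x) + p1 (lo y)) = \<alpha> (p1 (lo x)) + \<alpha> (p1 (lo y))"
      by (rule hom_add[OF al hom_in[OF p1 lo_f] hom_in[OF p1 lo_f]])
    have e4: "\<beta> (p2 (hi x) + p2 (hi y)) = \<beta> (p2 (hi x)) + \<beta> (p2 (hi y))"
      by (rule hom_add[OF be hom_in[OF p2 hi_f] hom_in[OF p2 hi_f]]) (fact that)+
    show ?thesis using that submod_add[OF submod_freemod that] unfolding p_def by (simp add: e1 e2 e3 e4 ac_simps)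
  qed
  have p_sm: "p (rsmult x c) = rsmult (p x) c" if "x \<in> freemod (m1 + m2)" for x c
  proof -
    have e1: "p1 (lo (rsmult x c)) = rsmult (p1 (lo x)) c" unfolding lo_sm by (rule hom_smult[OF p1 lo_f])
    have e2: "p2 (hi (rsmult x c)) = rsmult (p2 (hi x)) c" unfolding hi_sm by (rule hom_smult[OF p2 hi_f[OF that]])
    have e3: "\<alpha> (rsmult (p1 (lo x)) c) = rsmult (\<alpha> (p1 (lo x))) c"
      by (rule hom_smult[OF al hom_in[OF p1 lo_f]])
    have e4: "\<beta> (rsmult (p2 (hi x)) c) = rsmult (\<beta> (p2 (hi x))) c"
      by (rule hom_smult[OF be hom_in[OF p2 hi_f[OF that]]])
    show ?thesis using that submod_smult[OF submod_freemod that] unfolding p_def by (simp add: e1 e2 e3 e4 rsmult_add1)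
  qed
  have p_out: "\<forall>x. x \<notin> freemod (m1 + m2) \<longrightarrow> p x = 0" by (simp add: p_def)
  have hp: "p \<in> hom (freemod (m1 + m2)) M" unfolding hom_def using p_in p_add p_sm p_out by blast
  have s_in: "s v \<in> freemod (m1 + m2)" for v
  proof (cases "v \<in> M")
    case True
    have "s2 (\<tau> v) \<in> freemod m2" by (rule hom_in[OF s2 hom_in[OF ta True]])
    then show ?thesis using True by (auto simp: s_def freemod_def)
  next
    case False then show ?thesis by (simp add: s_def freemod_def)
  qed
  have s_add: "s (u + v) = s u + s v" if "u \<in> M" "v \<in> M" for u v
  proof -
    have uv: "u + v \<in> M" by (rule submod_add[OF M that])
    have e1: "s1 (\<rho> (u + v)) = s1 (\<rho> u) + s1 (\<rho> v)"
      unfolding hom_add[OF rh that] by (rule hom_add[OF s1 hom_in[OF rh that(1)] hom_in[OF rh that(2)]])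
    have e2: "s2 (\<tau> (u + v)) = s2 (\<tau> u) + s2 (\<tau> v)"
      unfolding hom_add[OF ta that] by (rule hom_add[OF s2 hom_in[OF ta that(1)] hom_in[OF ta that(2)]])
    show ?thesis using that uv unfolding s_def by (simp add: e1 e2 fun_eq_iff)
  qed
  have s_sm: "s (rsmult v c) = rsmult (s v) c" if "v \<in> M" for v c
  proof -
    have vc: "rsmult v c \<in> M" by (rule submod_smult[OF M that])
    have e1: "s1 (\<rho> (rsmult v c)) = rsmult (s1 (\<rho> v)) c"
      unfolding hom_smult[OF rh that] by (rule hom_smult[OF s1 hom_in[OF rh that]])
    have e2: "s2 (\<tau> (rsmult v c)) = rsmult (s2 (\<tau> v)) c"
      unfolding hom_smult[OF ta that] by (rule hom_smult[OF s2 hom_in[OF ta that]])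
    show ?thesis using that vc unfolding s_def by (simp add: e1 e2 fun_eq_iff)
  qed
  have s_out: "\<forall>v. v \<notin> M \<longrightarrow> s v = 0" by (simp add: s_def)
  have hs: "s \<in> hom M (freemod (m1 + m2))" unfolding hom_def using s_in s_add s_sm s_out by blast
  have ps: "p \<circ> s = idm M"
  proof
    fix v show "(p \<circ> s) v = idm M v"
    proof (cases "v \<in> M")
      case True
      have r: "\<rho> v \<in> A" by (rule hom_in[OF rh True])
      have t: "\<tau> v \<in> B" by (rule hom_in[OF ta True])
      have f1: "s1 (\<rho> v) \<in> freemod m1" by (rule hom_in[OF s1 r])
      have f2: "s2 (\<tau> v) \<in> freemod m2" by (rule hom_in[OF s2 t])
      have l: "lo (s v) = s1 (\<rho> v)" using True f1 by (auto simp: lo_def s_def fun_eq_iff freemod_def)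
      have h: "hi (s v) = s2 (\<tau> v)" using True by (auto simp: hi_def s_def fun_eq_iff)
      have q1: "p1 (s1 (\<rho> v)) = \<rho> v" using ps1 r by (metis comp_apply idm_def)
      have q2: "p2 (s2 (\<tau> v)) = \<tau> v" using ps2 t by (metis comp_apply idm_def)
      have "p (s v) = \<alpha> (\<rho> v) + \<beta> (\<tau> v)" using s_in[of v] by (simp add: p_def l h q1 q2)
      then show ?thesis using dec True by (simp add: idm_def)
    next
      case False
      have "lo 0 = 0" "hi 0 = 0" by (simp_all add: lo_def hi_def fun_eq_iff)
      then have "p 0 = 0" using submod_0[OF sF] hom_0[OF p1 sF] hom_0[OF p2 sF] hom_0[OF al sA] hom_0[OF be sB]
        by (simp add: p_def)
      then show ?thesis using False by (simp add: s_def idm_def)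
    qed
  qed
  show ?thesis unfolding proj_mod_def using M hp hs ps by blast
qed


lemma rsmult_diff: "rsmult (u - v) c = rsmult u c - rsmult (v::'a::ring_1 vec) c"
  by (simp add: fun_eq_iff rsmult_def left_diff_distrib)

lemma submod_Int: "submod A \<Longrightarrow> submod B \<Longrightarrow> submod (A \<inter> B)"
  unfolding submod_def by blast

lemma idm_hom: "submod A \<Longrightarrow> A \<subseteq> B \<Longrightarrow> idm A \<in> hom A B"
  unfolding hom_def idm_def using submod_add submod_smult by fastforce

lemma proj_zero: "proj_mod ({0} :: 'a::ring_1 vec set)"
proof -
  have z: "submod ({0} :: 'a vec set)" by (simp add: submod_def fvec_def)
  have h1: "(\<lambda>x. 0) \<in> hom (freemod 0) ({0} :: 'a vec set)" by (simp add: hom_def)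
  have h2: "(\<lambda>x. 0) \<in> hom ({0} :: 'a vec set) (freemod 0)" by (simp add: hom_def freemod_def)
  have h3: "(\<lambda>x::'a vec. 0::'a vec) \<circ> (\<lambda>x. 0) = idm {0}" by (simp add: fun_eq_iff idm_def)
  show ?thesis unfolding proj_mod_def using z h1 h2 h3 by blast
qed

lemma free_sub_proj:
  assumes H: "hereditary TYPE('a::ring_1)"
  shows "submod N \<Longrightarrow> N \<subseteq> freemod m \<Longrightarrow> proj_mod (N :: 'a vec set)"
proof (induction m arbitrary: N)
  case 0
  have "N = {0}"
  proof
    show "N \<subseteq> {0}" using 0(2) by (auto simp: freemod_def fun_eq_iff)
    show "{0} \<subseteq> N" using submod_0[OF 0(1)] by simp
  qed
  then show ?case using proj_zero by simp
next
  case (Suc m)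
  note N = Suc.prems(1)
  have Nf: "v \<in> N \<Longrightarrow> i \<ge> Suc m \<Longrightarrow> v i = 0" for v i using Suc.prems(2) by (auto simp: freemod_def)
  define N' where "N' = N \<inter> freemod m"
  have sN': "submod N'" unfolding N'_def by (rule submod_Int[OF N submod_freemod])
  have pN': "proj_mod N'" by (rule Suc.IH[OF sN']) (auto simp: N'_def)
  define I where "I = (\<lambda>v. v m) ` N"
  have rI: "right_ideal I"
  proof -
    have "0 \<in> I" unfolding I_def using submod_0[OF N] by (intro image_eqI[where x=0]) auto
    moreover have "\<forall>x\<in>I. \<forall>y\<in>I. x + y \<in> I"
      unfolding I_def using submod_add[OF N] by (auto intro!: image_eqI[where x="_ + _"])
    moreover have "\<forall>x\<in>I. \<forall>c. x * c \<in> I"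
      unfolding I_def using submod_smult[OF N] by (auto intro!: image_eqI[where x="rsmult _ _"])
    ultimately show ?thesis by (simp add: right_ideal_def)
  qed
  define IA where "IA = ideal_as_mod I"
  have pIA: "proj_mod IA" using H rI unfolding hereditary_def IA_def by blast
  have sIA: "submod IA" using pIA by (rule proj_submod)
  define \<pi> where "\<pi> v = (if v \<in> N then (\<lambda>i::nat. if i = 0 then v m else 0) else 0)" for v :: "'a vec"
  have \<pi>_in: "\<pi> v \<in> IA" for v
    using submod_0[OF sIA] by (auto simp: \<pi>_def IA_def ideal_as_mod_def I_def)
  have \<pi>_add: "\<pi> (u + v) = \<pi> u + \<pi> v" if "u \<in> N" "v \<in> N" for u v
    using that submod_add[OF N that] by (simp add: \<pi>_def fun_eq_iff)
  have \<pi>_sm: "\<pi> (rsmult v c) = rsmult (\<pi> v) c" if "v \<in> N" for v c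
    using that submod_smult[OF N that] by (simp add: \<pi>_def fun_eq_iff)
  have \<pi>_out: "\<forall>v. v \<notin> N \<longrightarrow> \<pi> v = 0" by (simp add: \<pi>_def)
  have h\<pi>: "\<pi> \<in> hom N IA" unfolding hom_def using \<pi>_in \<pi>_add \<pi>_sm \<pi>_out by blast
  have surj: "\<forall>y\<in>IA. \<exists>x\<in>N. \<pi> x = y"
  proof
    fix y assume y: "y \<in> IA"
    then obtain v where v: "v \<in> N" "v m = y 0" by (auto simp: IA_def ideal_as_mod_def I_def)
    have "\<pi> v = y" using v y by (auto simp: \<pi>_def IA_def ideal_as_mod_def fun_eq_iff)
    then show "\<exists>x\<in>N. \<pi> x = y" using v by blast
  qed
  obtain \<sigma> where h\<sigma>: "\<sigma> \<in> hom IA N" and ps: "\<pi> \<circ> \<sigma> = idm IA"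
    using lift[OF pIA N h\<pi> surj] by blast
  have key: "\<sigma> y m = y 0" if "y \<in> IA" for y
  proof -
    have "\<pi> (\<sigma> y) = y" using ps that by (metis comp_apply idm_def)
    then have "\<pi> (\<sigma> y) 0 = y 0" by simp
    then show ?thesis using hom_in[OF h\<sigma> that] by (simp add: \<pi>_def)
  qed
  define \<rho> where "\<rho> v = (if v \<in> N then v - \<sigma> (\<pi> v) else 0)" for v
  have \<rho>_in: "\<rho> v \<in> N'" for v
  proof (cases "v \<in> N")
    case True
    have s1: "\<sigma> (\<pi> v) \<in> N" by (rule hom_in[OF h\<sigma> \<pi>_in])
    have k: "\<sigma> (\<pi> v) m = v m" using key[OF \<pi>_in[of v]] True by (simp add: \<pi>_def)
    have "v - \<sigma> (\<pi> v) \<in> N" by (rule submod_diff[OF N True s1])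
    moreover have "v - \<sigma> (\<pi> v) \<in> freemod m"
      unfolding freemod_def
    proof (intro CollectI allI impI)
      fix i assume i: "m \<le> i"
      show "(v - \<sigma> (\<pi> v)) i = 0"
      proof (cases "i = m")
        case True then show ?thesis using k by simp
      next
        case False then have "i \<ge> Suc m" using i by simp
        then show ?thesis using Nf[OF s1] Nf[OF \<open>v \<in> N\<close>] by simp
      qed
    qed
    ultimately show ?thesis using True by (simp add: \<rho>_def N'_def)
  next
    case False then show ?thesis using submod_0[OF sN'] by (simp add: \<rho>_def)
  qed
  have \<rho>_add: "\<rho> (u + v) = \<rho> u + \<rho> v" if "u \<in> N" "v \<in> N" for u v
  proof -
    have "\<sigma> (\<pi> (u + v)) = \<sigma> (\<pi> u) + \<sigma> (\<pi> v)"
      unfolding \<pi>_add[OF that] by (rule hom_add[OF h\<sigma> \<pi>_in \<pi>_in])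
    then show ?thesis using that submod_add[OF N that] by (simp add: \<rho>_def algebra_simps)
  qed
  have \<rho>_sm: "\<rho> (rsmult v c) = rsmult (\<rho> v) c" if "v \<in> N" for v c
  proof -
    have "\<sigma> (\<pi> (rsmult v c)) = rsmult (\<sigma> (\<pi> v)) c"
      unfolding \<pi>_sm[OF that] by (rule hom_smult[OF h\<sigma> \<pi>_in])
    then show ?thesis using that submod_smult[OF N that] by (simp add: \<rho>_def rsmult_diff)
  qed
  have \<rho>_out: "\<forall>v. v \<notin> N \<longrightarrow> \<rho> v = 0" by (simp add: \<rho>_def)
  have h\<rho>: "\<rho> \<in> hom N N'" unfolding hom_def using \<rho>_in \<rho>_add \<rho>_sm \<rho>_out by blast
  have h\<alpha>: "idm N' \<in> hom N' N" by (rule idm_hom[OF sN']) (auto simp: N'_def)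
  have dec: "\<forall>v\<in>N. idm N' (\<rho> v) + \<sigma> (\<pi> v) = v"
  proof (intro ballI)
    fix v assume v: "v \<in> N"
    have r: "\<rho> v = v - \<sigma> (\<pi> v)" using v by (simp add: \<rho>_def)
    have "idm N' (\<rho> v) = \<rho> v" using \<rho>_in[of v] by (simp add: idm_def)
    then show "idm N' (\<rho> v) + \<sigma> (\<pi> v) = v" using r by simp
  qed
  show ?case by (rule sum_proj[OF pN' pIA N h\<alpha> h\<sigma> h\<rho> h\<pi> dec])
qed

lemma sub_proj:
  assumes H: "hereditary TYPE('a::ring_1)" and P: "proj_mod P" and N: "submod N" and NP: "N \<subseteq> P"
  shows "proj_mod (N :: 'a vec set)"
proof -
  obtain m p s where p: "p \<in> hom (freemod m) P" and s: "s \<in> hom P (freemod m)" and ps: "p \<circ> s = idm P"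
    using P unfolding proj_mod_def by blast
  have sP: "submod P" using P by (rule proj_submod)
  have psv: "p (s v) = v" if "v \<in> P" for v using ps that by (metis comp_apply idm_def)
  define N0 where "N0 = s ` N"
  have N0f: "N0 \<subseteq> freemod m" unfolding N0_def using hom_in[OF s] NP by blast
  have sN0: "submod N0"
  proof -
    have "N0 \<subseteq> fvec" using N0f freemod_fvec by blast
    moreover have "0 \<in> N0" unfolding N0_def using submod_0[OF N] hom_0[OF s sP] by (metis image_eqI)
    moreover have "\<forall>u\<in>N0. \<forall>v\<in>N0. u + v \<in> N0"
    proof (intro ballI)
      fix u v assume "u \<in> N0" "v \<in> N0"
      then obtain a b where ab: "a \<in> N" "b \<in> N" "u = s a" "v = s b" by (auto simp: N0_def)
      have "a \<in> P" "b \<in> P" using ab NP by auto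
      then have "u + v = s (a + b)" using hom_add[OF s \<open>a \<in> P\<close> \<open>b \<in> P\<close>] ab by simp
      then show "u + v \<in> N0" using submod_add[OF N ab(1,2)] by (simp add: N0_def)
    qed
    moreover have "\<forall>v\<in>N0. \<forall>c. rsmult v c \<in> N0"
    proof (intro ballI allI)
      fix v c assume "v \<in> N0"
      then obtain a where a: "a \<in> N" "v = s a" by (auto simp: N0_def)
      have "a \<in> P" using a NP by auto
      then have "rsmult v c = s (rsmult a c)" using hom_smult[OF s \<open>a \<in> P\<close>] a by simp
      then show "rsmult v c \<in> N0" using submod_smult[OF N a(1)] by (simp add: N0_def)
    qed
    ultimately show ?thesis by (simp add: submod_def)
  qed
  have pN0: "proj_mod N0" by (rule free_sub_proj[OF H sN0 N0f])
  define a where "a x = (if x \<in> N0 then p x else 0)" for x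
  define b where "b v = (if v \<in> N then s v else 0)" for v
  have ha: "a \<in> hom N0 N"
  proof -
    have 1: "\<forall>x\<in>N0. a x \<in> N" unfolding a_def N0_def using psv NP by auto
    have 2: "\<forall>u\<in>N0. \<forall>v\<in>N0. a (u + v) = a u + a v"
      unfolding a_def using hom_add[OF p] N0f submod_add[OF sN0] by auto
    have 3: "\<forall>v\<in>N0. \<forall>c. a (rsmult v c) = rsmult (a v) c"
      unfolding a_def using hom_smult[OF p] N0f submod_smult[OF sN0] by auto
    have 4: "\<forall>v. v \<notin> N0 \<longrightarrow> a v = 0" by (simp add: a_def)
    show ?thesis unfolding hom_def using 1 2 3 4 by blast
  qed
  have hb: "b \<in> hom N N0"
  proof -
    have 1: "\<forall>x\<in>N. b x \<in> N0" unfolding b_def N0_def by auto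
    have 2: "\<forall>u\<in>N. \<forall>v\<in>N. b (u + v) = b u + b v"
      unfolding b_def using hom_add[OF s] NP submod_add[OF N] by auto
    have 3: "\<forall>v\<in>N. \<forall>c. b (rsmult v c) = rsmult (b v) c"
      unfolding b_def using hom_smult[OF s] NP submod_smult[OF N] by auto
    have 4: "\<forall>v. v \<notin> N \<longrightarrow> b v = 0" by (simp add: b_def)
    show ?thesis unfolding hom_def using 1 2 3 4 by blast
  qed
  have ab: "a \<circ> b = idm N"
  proof
    fix v show "(a \<circ> b) v = idm N v"
    proof (cases "v \<in> N")
      case True
      then show ?thesis using psv NP by (auto simp: a_def b_def idm_def N0_def)
    next
      case False
      then show ?thesis using hom_0[OF ha sN0] by (simp add: b_def idm_def)
    qed
  qed
  show ?thesis by (rule retract_proj[OF pN0 N ha hb ab])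
qed


lemma Cn_iff: "X \<in> Cn n \<longleftrightarrow> (\<forall>i. proj_mod (fst X i)) \<and> (\<forall>i. i \<notin> {1..n} \<longrightarrow> fst X i = {0})
     \<and> (\<forall>i. snd X i \<in> hom (fst X i) (fst X (Suc i))) \<and> (\<forall>i. snd X (Suc i) \<circ> snd X i = (\<lambda>_. 0))"
  by (cases X) (simp add: Cn_def)

lemma chmap_iff: "f \<in> chmap A B \<longleftrightarrow> (\<forall>i. f i \<in> hom (fst A i) (fst B i)) \<and> (\<forall>i. f (Suc i) \<circ> snd A i = snd B i \<circ> f i)"
  by (simp add: chmap_def)

lemma Cn_sub: "X \<in> Cn n \<Longrightarrow> submod (fst X i)"
  using Cn_iff proj_submod by blast

lemma image_submod:
  assumes M: "submod M" and N: "submod N" and f: "f \<in> hom M N"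
  shows "submod (f ` M)"
proof -
  have "f ` M \<subseteq> fvec" using hom_in[OF f] N by (auto simp: submod_def)
  moreover have "0 \<in> f ` M" using hom_0[OF f M] submod_0[OF M] by (metis image_eqI)
  moreover have "\<forall>u\<in>f ` M. \<forall>v\<in>f ` M. u + v \<in> f ` M"
  proof (intro ballI)
    fix u v assume "u \<in> f ` M" "v \<in> f ` M"
    then obtain a b where ab: "a \<in> M" "b \<in> M" "u = f a" "v = f b" by auto
    then have "u + v = f (a + b)" using hom_add[OF f ab(1,2)] by simp
    then show "u + v \<in> f ` M" using submod_add[OF M ab(1,2)] by simp
  qed
  moreover have "\<forall>v\<in>f ` M. \<forall>c. rsmult v c \<in> f ` M"
  proof (intro ballI allI)
    fix v c assume "v \<in> f ` M"
    then obtain a where a: "a \<in> M" "v = f a" by auto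
    then have "rsmult v c = f (rsmult a c)" using hom_smult[OF f a(1)] by simp
    then show "rsmult v c \<in> f ` M" using submod_smult[OF M a(1)] by simp
  qed
  ultimately show ?thesis by (simp add: submod_def)
qed

lemma kernel_submod:
  assumes M: "submod M" and N: "submod N" and f: "f \<in> hom M N"
  shows "submod {v \<in> M. f v = 0}"
proof -
  have "{v \<in> M. f v = 0} \<subseteq> fvec" using M by (auto simp: submod_def)
  moreover have "0 \<in> {v \<in> M. f v = 0}" using hom_0[OF f M] submod_0[OF M] by simp
  moreover have "\<forall>u\<in>{v \<in> M. f v = 0}. \<forall>v\<in>{v \<in> M. f v = 0}. u + v \<in> {v \<in> M. f v = 0}"
    using hom_add[OF f] submod_add[OF M] by auto
  moreover have "\<forall>v\<in>{v \<in> M. f v = 0}. \<forall>c. rsmult v c \<in> {v \<in> M. f v = 0}"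
    using hom_smult[OF f] submod_smult[OF M] by auto
  ultimately show ?thesis by (simp add: submod_def)
qed

lemma ker_Cn:
  assumes H: "hereditary TYPE('a::ring_1)" and X: "X \<in> Cn n" and Y: "Y \<in> Cn n"
    and f: "f \<in> chmap X (Y :: 'a cx)"
  shows "kerCx f X \<in> Cn n"
proof -
  define K where "K i = {v \<in> fst X i. f i v = 0}" for i
  define dK where "dK i v = (if v \<in> K i then snd X i v else 0)" for i v
  have KX: "kerCx f X = (K, dK)" by (simp add: kerCx_def K_def dK_def Let_def fun_eq_iff)
  have fi: "f i \<in> hom (fst X i) (fst Y i)" for i using f by (simp add: chmap_iff)
  have fc: "f (Suc i) \<circ> snd X i = snd Y i \<circ> f i" for i using f by (simp add: chmap_iff)
  have dX: "snd X i \<in> hom (fst X i) (fst X (Suc i))" for i using X by (simp add: Cn_iff)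
  have dY: "snd Y i \<in> hom (fst Y i) (fst Y (Suc i))" for i using Y by (simp add: Cn_iff)
  have sX: "submod (fst X i)" for i using Cn_sub[OF X] .
  have sY: "submod (fst Y i)" for i using Cn_sub[OF Y] .
  have sK: "submod (K i)" for i unfolding K_def by (rule kernel_submod[OF sX sY fi])
  have pK: "proj_mod (K i)" for i
    by (rule sub_proj[OF H _ sK]) (use X in \<open>auto simp: Cn_iff K_def\<close>)
  have zK: "i \<notin> {1..n} \<Longrightarrow> K i = {0}" for i
    using X hom_0[OF fi sX] by (auto simp: Cn_iff K_def)
  have dKin: "dK i v \<in> K (Suc i)" for i v
  proof (cases "v \<in> K i")
    case True
    then have v: "v \<in> fst X i" "f i v = 0" by (auto simp: K_def)
    have "f (Suc i) (snd X i v) = snd Y i (f i v)" using fc[of i] by (metis comp_apply)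
    then have "f (Suc i) (snd X i v) = 0" using v hom_0[OF dY sY] by simp
    then show ?thesis using True hom_in[OF dX v(1)] by (simp add: dK_def K_def)
  next
    case False then show ?thesis using submod_0[OF sK] by (simp add: dK_def)
  qed
  have dKadd: "\<forall>u\<in>K i. \<forall>v\<in>K i. dK i (u + v) = dK i u + dK i v" for i
    using submod_add[OF sK] hom_add[OF dX] by (auto simp: dK_def K_def)
  have dKsm: "\<forall>v\<in>K i. \<forall>c. dK i (rsmult v c) = rsmult (dK i v) c" for i
    using submod_smult[OF sK] hom_smult[OF dX] by (auto simp: dK_def K_def)
  have dKout: "\<forall>v. v \<notin> K i \<longrightarrow> dK i v = 0" for i by (simp add: dK_def)
  have hK: "dK i \<in> hom (K i) (K (Suc i))" for i
    unfolding hom_def using dKin dKadd dKout dKsm by blast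
  have ddK: "dK (Suc i) \<circ> dK i = (\<lambda>_. 0)" for i
  proof
    fix v show "(dK (Suc i) \<circ> dK i) v = 0"
    proof (cases "v \<in> K i")
      case True
      have "snd X (Suc i) (snd X i v) = 0" using X by (simp add: Cn_iff) (metis comp_apply)
      then show ?thesis using True dKin[of i v] by (simp add: dK_def)
    next
      case False then show ?thesis using hom_0[OF hK sK] by (simp add: dK_def)
    qed
  qed
  show ?thesis unfolding KX Cn_def using pK zK hK ddK by auto
qed

lemma Cn_ret_all:
  assumes X: "X \<in> Cn n" and Y: "Y \<in> Cn n" and f: "f \<in> chmap X Y" and r: "type_ret n X Y f"
  shows "ret_P (fst X i) (fst Y i) (f i)"
proof (cases "i \<in> {1..n}")
  case True then show ?thesis using r by (simp add: type_ret_def)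
next
  case False
  have fi: "f i \<in> hom (fst X i) (fst Y i)" using f by (simp add: chmap_iff)
  have e: "fst X i = {0}" "fst Y i = {0}" using X Y False by (auto simp: Cn_iff)
  have h: "(\<lambda>v. 0) \<in> hom (fst Y i) (fst X i)" using e by (simp add: hom_def)
  have "f i \<circ> (\<lambda>v. 0) = idm (fst Y i)" using e hom_0[OF fi Cn_sub[OF X]] by (simp add: fun_eq_iff idm_def)
  then show ?thesis using fi h by (auto simp: ret_P_def)
qed

lemma ret_inj_section:
  assumes X: "X \<in> Cn n" and Y: "Y \<in> Cn n" and f: "f \<in> chmap X Y"
    and r: "\<And>i. ret_P (fst X i) (fst Y i) (f i)"
    and inj0: "\<And>i v. v \<in> fst X i \<Longrightarrow> f i v = 0 \<Longrightarrow> v = 0"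
  shows "section_C X Y f"
proof -
  have fi: "f i \<in> hom (fst X i) (fst Y i)" for i using f by (simp add: chmap_iff)
  have fc: "f (Suc i) \<circ> snd X i = snd Y i \<circ> f i" for i using f by (simp add: chmap_iff)
  have dX: "snd X i \<in> hom (fst X i) (fst X (Suc i))" for i using X by (simp add: Cn_iff)
  have dY: "snd Y i \<in> hom (fst Y i) (fst Y (Suc i))" for i using Y by (simp add: Cn_iff)
  have sX: "submod (fst X i)" for i using Cn_sub[OF X] .
  have sY: "submod (fst Y i)" for i using Cn_sub[OF Y] .
  have "\<forall>i. \<exists>s. s \<in> hom (fst Y i) (fst X i) \<and> f i \<circ> s = idm (fst Y i)" using r unfolding ret_P_def by blast
  then obtain S where S: "\<And>i. S i \<in> hom (fst Y i) (fst X i)" and fS: "\<And>i. f i \<circ> S i = idm (fst Y i)"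
    by metis
  have fSy: "f i (S i y) = y" if "y \<in> fst Y i" for i y using fS[of i] that by (metis comp_apply idm_def)
  have inj: "u = v" if "u \<in> fst X i" "v \<in> fst X i" "f i u = f i v" for i u v
  proof -
    have "f i (u - v) = 0" using hom_diff[OF fi sX that(1,2)] that(3) by simp
    then have "u - v = 0" using inj0 submod_diff[OF sX that(1,2)] by blast
    then show ?thesis by simp
  qed
  have Sf: "S i (f i x) = x" if "x \<in> fst X i" for i x
    using inj[OF hom_in[OF S hom_in[OF fi that]] that] fSy[OF hom_in[OF fi that]] by simp
  have Sc: "S (Suc i) \<circ> snd Y i = snd X i \<circ> S i" for i
  proof
    fix y show "(S (Suc i) \<circ> snd Y i) y = (snd X i \<circ> S i) y"
    proof (cases "y \<in> fst Y i")
      case True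
      define x where "x = S i y"
      have x: "x \<in> fst X i" "f i x = y" using hom_in[OF S True] fSy[OF True] by (simp_all add: x_def)
      have "snd Y i y = f (Suc i) (snd X i x)" using fc[of i] x(2) by (metis comp_apply)
      then have "S (Suc i) (snd Y i y) = snd X i x" using Sf[OF hom_in[OF dX x(1)]] by simp
      then show ?thesis by (simp add: x_def)
    next
      case False
      then show ?thesis using hom_out[OF S False] hom_out[OF dY False] hom_0[OF dX sX] hom_0[OF S sY] by simp
    qed
  qed
  have Sm: "S \<in> chmap Y X" using S Sc by (simp add: chmap_iff)
  have "cmp S f = cid X"
  proof (rule ext, rule ext)
    fix i v show "cmp S f i v = cid X i v"
    proof (cases "v \<in> fst X i")
      case True then show ?thesis using Sf by (simp add: cmp_def cid_def idm_def)
    next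
      case False then show ?thesis using hom_out[OF fi False] hom_0[OF S sY] by (simp add: cmp_def cid_def idm_def)
    qed
  qed
  then show ?thesis using f Sm by (auto simp: section_C_def)
qed


lemma ret_of_ker_nonzero:
  assumes H: "hereditary TYPE('a::ring_1)" and X: "X \<in> Cn n" and Y: "Y \<in> Cn n"
    and irr: "irreducible_C n X (Y :: 'a cx) f" and nz: "\<not> is_zero_cx (kerCx f X)"
  shows "type_ret n X Y f"
proof -
  have f: "f \<in> chmap X Y" using irr by (simp add: irreducible_C_def)
  have fi: "f i \<in> hom (fst X i) (fst Y i)" for i using f by (simp add: chmap_iff)
  have fc: "f (Suc i) \<circ> snd X i = snd Y i \<circ> f i" for i using f by (simp add: chmap_iff)
  have dX: "snd X i \<in> hom (fst X i) (fst X (Suc i))" for i using X by (simp add: Cn_iff)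
  have dY: "snd Y i \<in> hom (fst Y i) (fst Y (Suc i))" for i using Y by (simp add: Cn_iff)
  have sX: "submod (fst X i)" for i using Cn_sub[OF X] .
  have sY: "submod (fst Y i)" for i using Cn_sub[OF Y] .
  have fcv: "f (Suc i) (snd X i x) = snd Y i (f i x)" for i x using fc[of i] by (metis comp_apply)
  define I where "I i = f i ` fst X i" for i
  define dI where "dI i v = (if v \<in> I i then snd Y i v else 0)" for i v
  define Z where "Z = (I, dI)"
  have IY: "I i \<subseteq> fst Y i" for i unfolding I_def using hom_in[OF fi] by blast
  have sI: "submod (I i)" for i unfolding I_def by (rule image_submod[OF sX sY fi])
  have pI: "proj_mod (I i)" for i
    by (rule sub_proj[OF H _ sI IY]) (use Y in \<open>simp add: Cn_iff\<close>)
  have zI: "i \<notin> {1..n} \<Longrightarrow> I i = {0}" for i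
    using X hom_0[OF fi sX] by (auto simp: Cn_iff I_def)
  have dIin: "dI i v \<in> I (Suc i)" for i v
  proof (cases "v \<in> I i")
    case True
    then obtain x where x: "x \<in> fst X i" "v = f i x" by (auto simp: I_def)
    have "dI i v = f (Suc i) (snd X i x)" using True x fcv by (simp add: dI_def)
    then show ?thesis using hom_in[OF dX x(1)] by (simp add: I_def)
  next
    case False then show ?thesis using submod_0[OF sI] by (simp add: dI_def)
  qed
  have dIadd: "\<forall>u\<in>I i. \<forall>v\<in>I i. dI i (u + v) = dI i u + dI i v" for i
  proof (intro ballI)
    fix u v assume uv: "u \<in> I i" "v \<in> I i"
    then have "u \<in> fst Y i" "v \<in> fst Y i" using IY by blast+
    then show "dI i (u + v) = dI i u + dI i v"
      using uv submod_add[OF sI uv] hom_add[OF dY] by (simp add: dI_def)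
  qed
  have dIsm: "\<forall>v\<in>I i. \<forall>c. dI i (rsmult v c) = rsmult (dI i v) c" for i
  proof (intro ballI allI)
    fix v c assume v: "v \<in> I i"
    then have "v \<in> fst Y i" using IY by blast
    then show "dI i (rsmult v c) = rsmult (dI i v) c"
      using v submod_smult[OF sI v] hom_smult[OF dY] by (simp add: dI_def)
  qed
  have dIout: "\<forall>v. v \<notin> I i \<longrightarrow> dI i v = 0" for i by (simp add: dI_def)
  have hI: "dI i \<in> hom (I i) (I (Suc i))" for i
    unfolding hom_def using dIin dIadd dIout dIsm by blast
  have ddI: "dI (Suc i) \<circ> dI i = (\<lambda>_. 0)" for i
  proof
    fix v show "(dI (Suc i) \<circ> dI i) v = 0"
    proof (cases "v \<in> I i")
      case True
      have "snd Y (Suc i) (snd Y i v) = 0" using Y by (simp add: Cn_iff) (metis comp_apply)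
      then show ?thesis using True dIin[of i v] by (simp add: dI_def)
    next
      case False then show ?thesis using hom_0[OF hI sI] by (simp add: dI_def)
    qed
  qed
  have ZC: "Z \<in> Cn n" unfolding Z_def Cn_def using pI zI hI ddI by auto
  have fZ: "f i \<in> hom (fst X i) (I i)" for i
    using fi unfolding hom_def I_def by auto
  have fZc: "f (Suc i) \<circ> snd X i = dI i \<circ> f i" for i
  proof
    fix v show "(f (Suc i) \<circ> snd X i) v = (dI i \<circ> f i) v"
    proof (cases "v \<in> fst X i")
      case True
      then have "f i v \<in> I i" by (simp add: I_def)
      then show ?thesis using fcv by (simp add: dI_def)
    next
      case False
      then show ?thesis using hom_out[OF dX False] hom_out[OF fi False] hom_0[OF fi sX] hom_0[OF hI sI]
        by simp
    qed
  qed
  have pm: "f \<in> chmap X Z" using fZ fZc by (simp add: chmap_iff Z_def)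
  define j where "j i = idm (I i)" for i
  have jh: "j i \<in> hom (I i) (fst Y i)" for i unfolding j_def by (rule idm_hom[OF sI IY])
  have jc: "j (Suc i) \<circ> dI i = snd Y i \<circ> j i" for i
  proof
    fix v show "(j (Suc i) \<circ> dI i) v = (snd Y i \<circ> j i) v"
    proof (cases "v \<in> I i")
      case True
      then show ?thesis using dIin[of i v] by (simp add: j_def idm_def dI_def)
    next
      case False
      then show ?thesis using hom_0[OF dY sY] hom_0[OF jh sI] by (simp add: j_def idm_def dI_def)
    qed
  qed
  have jm: "j \<in> chmap Z Y" using jh jc by (simp add: chmap_iff Z_def)
  have fac: "f = cmp j f"
  proof (rule ext, rule ext)
    fix i v show "f i v = cmp j f i v"
    proof (cases "v \<in> fst X i")
      case True then show ?thesis by (simp add: cmp_def j_def idm_def I_def)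
    next
      case False then show ?thesis using hom_out[OF fi False] by (simp add: cmp_def j_def idm_def)
    qed
  qed
  have "section_C X Z f \<or> retraction_C Z Y j"
    using irr ZC jm pm fac unfolding irreducible_C_def by blast
  then show ?thesis
  proof
    assume "section_C X Z f"
    then obtain r where r: "r \<in> chmap Z X" and rf: "cmp r f = cid X" by (auto simp: section_C_def)
    have "is_zero_cx (kerCx f X)"
      unfolding is_zero_cx_def
    proof
      fix i
      have ri: "r i \<in> hom (I i) (fst X i)" using r by (simp add: chmap_iff Z_def)
      have "v = 0" if "v \<in> fst X i" "f i v = 0" for v
      proof -
        have "r i (f i v) = v" using rf that(1) by (metis cid_def cmp_def comp_apply idm_def)
        then show ?thesis using that(2) hom_0[OF ri sI] by simp
      qed
      then show "fst (kerCx f X) i = {0}"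
        using submod_0[OF sX] hom_0[OF fi sX] by (auto simp: kerCx_def Let_def)
    qed
    then show ?thesis using nz by simp
  next
    assume "retraction_C Z Y j"
    then obtain s where s: "s \<in> chmap Y Z" and js: "cmp j s = cid Y" by (auto simp: retraction_C_def)
    show ?thesis unfolding type_ret_def
    proof
      fix i assume "i \<in> {1..n}"
      have si: "s i \<in> hom (fst Y i) (I i)" using s by (simp add: chmap_iff Z_def)
      have surj: "\<forall>y\<in>fst Y i. \<exists>x\<in>fst X i. f i x = y"
      proof
        fix y assume y: "y \<in> fst Y i"
        have "j i (s i y) = y" using js y by (metis cid_def cmp_def comp_apply idm_def)
        moreover have "s i y \<in> I i" by (rule hom_in[OF si y])
        ultimately have "y \<in> I i" by (simp add: j_def idm_def)
        then show "\<exists>x\<in>fst X i. f i x = y" by (auto simp: I_def)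
      qed
      obtain \<sigma> where "\<sigma> \<in> hom (fst Y i) (fst X i)" "f i \<circ> \<sigma> = idm (fst Y i)"
        using lift[OF _ sX fi surj] Y by (auto simp: Cn_iff)
      then show "ret_P (fst X i) (fst Y i) (f i)" using fi by (auto simp: ret_P_def)
    qed
  qed
qed

theorem proposition2p5:
  fixes n :: nat and X Y :: "'a::ring_1 cx" and f :: "nat \<Rightarrow> 'a vec \<Rightarrow> 'a vec"
  assumes "artin_algebra TYPE('a)" and "hereditary TYPE('a)" and "n \<ge> 2"
    and "X \<in> Cn n" and "Y \<in> Cn n"
    and "irreducible_C n X Y f"
    and "indec_C n X \<or> indec_C n Y"
  shows "(type_ret n X Y f \<longleftrightarrow> (kerCx f X \<in> Cn n \<and> \<not> is_zero_cx (kerCx f X)))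
       \<and> (type_ris n X Y f \<longrightarrow> is_zero_cx (kerCx f X))"
proof -
  note H = assms(2) and X = assms(4) and Y = assms(5) and irr = assms(6)
  have f: "f \<in> chmap X Y" using irr by (simp add: irreducible_C_def)
  have nsec: "\<not> section_C X Y f" using irr by (simp add: irreducible_C_def)
  have A: "type_ret n X Y f \<longrightarrow> (kerCx f X \<in> Cn n \<and> \<not> is_zero_cx (kerCx f X))"
  proof
    assume r: "type_ret n X Y f"
    have "\<not> is_zero_cx (kerCx f X)"
    proof
      assume z: "is_zero_cx (kerCx f X)"
      have inj0: "v = 0" if "v \<in> fst X i" "f i v = 0" for i v
        using z that unfolding is_zero_cx_def by (auto simp: kerCx_def Let_def)
      have "section_C X Y f"
        by (rule ret_inj_section[OF X Y f Cn_ret_all[OF X Y f r] inj0])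
      then show False using nsec by simp
    qed
    then show "kerCx f X \<in> Cn n \<and> \<not> is_zero_cx (kerCx f X)" using ker_Cn[OF H X Y f] by simp
  qed
  have B: "\<not> is_zero_cx (kerCx f X) \<longrightarrow> type_ret n X Y f"
    using ret_of_ker_nonzero[OF H X Y irr] by blast
  have C: "type_ris n X Y f \<longrightarrow> is_zero_cx (kerCx f X)"
  proof
    assume "type_ris n X Y f"
    then obtain i where i: "i \<in> {1..n}" and ir: "irred_P (fst X i) (fst Y i) (f i)"
      by (auto simp: type_ris_def)
    show "is_zero_cx (kerCx f X)"
    proof (rule ccontr)
      assume "\<not> is_zero_cx (kerCx f X)"
      then have "type_ret n X Y f" using B by simp
      then have "ret_P (fst X i) (fst Y i) (f i)" using i by (simp add: type_ret_def)
      then show False using ir by (simp add: irred_P_def)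
    qed
  qed
  show ?thesis using A B C by blast
qed

end
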